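(* Let $k\ge2$ and let $\mathcal C_1$ be the binary code with generator matrix $[I_k\ \tilde G_k]$. Then $\mathcal C_1$ has the Easy Repair Property.
   Context: $\tilde G_k$ denotes the $k\times\frac{k(k-1)}{2}$ binary matrix whose columns are all vectors of $\mathbb F_2^k$ of Hamming weight $2$. Let $g_1,\dots,g_n$ ($n=\frac{k(k+1)}2$) be the columns of $[I_k\ \tilde G_k]$; nodes are coordinates $c_1,\dots,c_n$ of codewords $c=u[I_k\ \tilde G_k]$. An erasure pattern is a set $S^e$ of erased nodes; the others are live. It is correctable if no two distinct codewords coincide on all live positions. A node $c_i$ is related to distinct nodes $c_{j_1},\dots,c_{j_\gamma}$ (all different from $c_i$) if $g_i=g_{j_1}+\dots+g_{j_\gamma}$. An erased node allows for easy repair if it is related to $\gamma\le2$ live nodes. An erasure pattern allows for easy repair if all erased nodes can be recovered by a sequence of easy repairs, where after each step the recovered node is regarded as live. A code has the Easy Repair Property if every correctable erasure pattern allows for easy repair. *)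

theory Defs
  imports Main
begin

text \<open>Vectors of F_2^k are represented by their supports (subsets of {0..<k});
  addition in F_2^k is symmetric difference of supports.\<close>

text \<open>Columns of the generator matrix [I_k  G~_k]: first the k unit vectors,
  then all weight-2 vectors of F_2^k.\<close>
definition cols :: "nat \<Rightarrow> nat set list" where
  "cols k = map (\<lambda>i. {i}) [0..<k] @ concat (map (\<lambda>b. map (\<lambda>a. {a, b}) [0..<b]) [0..<k])"

definition ncols :: "nat \<Rightarrow> nat" where
  "ncols k = length (cols k)"

definition gcol :: "nat \<Rightarrow> nat \<Rightarrow> nat set" where
  "gcol k i = cols k ! i"

definition gsum :: "nat \<Rightarrow> nat set \<Rightarrow> nat set" where
  "gsum k J = {x. odd (card {j \<in> J. x \<in> gcol k j})}"

text \<open>Codeword c = u [I_k G~_k] for message u \<subseteq> {0..<k}: c_i = <u, g_i> over F_2.\<close>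
definition codeword :: "nat \<Rightarrow> nat set \<Rightarrow> nat \<Rightarrow> bool" where
  "codeword k u i = odd (card (u \<inter> gcol k i))"

definition correctable :: "nat \<Rightarrow> nat set \<Rightarrow> bool" where
  "correctable k E \<longleftrightarrow>
     (\<forall>u \<subseteq> {0..<k}. \<forall>v \<subseteq> {0..<k}.
        (\<forall>i < ncols k. i \<notin> E \<longrightarrow> codeword k u i = codeword k v i) \<longrightarrow>
        (\<forall>i < ncols k. codeword k u i = codeword k v i))"

definition related :: "nat \<Rightarrow> nat \<Rightarrow> nat set \<Rightarrow> bool" where
  "related k i J \<longleftrightarrow> i < ncols k \<and> J \<subseteq> {0..<ncols k} \<and> i \<notin> J \<and> J \<noteq> {} \<and>
     gcol k i = gsum k J"

text \<open>Easy repair: erased nodes can be recovered one by one, each from at most 2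
  nodes that are live at that time (original live nodes or already recovered ones).
  easy_repairable k E: the erasure pattern E allows for easy repair.\<close>
inductive easy_repairable :: "nat \<Rightarrow> nat set \<Rightarrow> bool" for k where
  empty: "easy_repairable k {}"
| step: "\<lbrakk> easy_repairable k E; i < ncols k; i \<notin> E;
           J \<subseteq> {0..<ncols k} - insert i E; card J \<le> 2; related k i J \<rbrakk>
         \<Longrightarrow> easy_repairable k (insert i E)"

definition easy_repair_property :: "nat \<Rightarrow> bool" where
  "easy_repair_property k \<longleftrightarrow>
     (\<forall>E \<subseteq> {0..<ncols k}. correctable k E \<longrightarrow> easy_repairable k E)"

end

theory Submission
  imports Defs
begin

lemma set_cols: "set (cols k) = (\<lambda>i. {i}) ` {0..<k} \<union> {{a,b} | a b. a < b \<and> b < k}"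
  unfolding cols_def by (auto simp del: upt.simps)

lemma distinct_pairs: "distinct (concat (map (\<lambda>b. map (\<lambda>a. {a, b}) [0..<b]) [0..<k]))"
proof (induction k)
  case 0 then show ?case by simp
next
  case (Suc k)
  have d: "distinct (map (\<lambda>a. {a, k}) [0..<k])"
    by (auto simp: distinct_map inj_on_def doubleton_eq_iff)
  have "set (concat (map (\<lambda>b. map (\<lambda>a. {a, b}) [0..<b]) [0..<k])) \<inter> set (map (\<lambda>a. {a, k}) [0..<k]) = {}"
    by (auto simp: doubleton_eq_iff)
  with Suc d show ?case by simp
qed

lemma distinct_cols: "distinct (cols k)"
  unfolding cols_def using distinct_pairs[of k]
  by (auto simp: distinct_map inj_on_def)

definition vc :: "nat \<Rightarrow> nat \<Rightarrow> nat \<Rightarrow> nat set" where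
  "vc k a b = {a, b} - {k}"

lemma col_vc: "i < ncols k \<Longrightarrow> \<exists>a b. a \<noteq> b \<and> a \<le> k \<and> b \<le> k \<and> gcol k i = vc k a b"
proof -
  assume "i < ncols k"
  then have "gcol k i \<in> set (cols k)" unfolding gcol_def ncols_def by simp
  then show ?thesis unfolding set_cols
  proof
    assume "gcol k i \<in> (\<lambda>i. {i}) ` {0..<k}"
    then obtain a where "a < k" "gcol k i = {a}" by auto
    then show ?thesis by (intro exI[of _ a] exI[of _ k]) (auto simp: vc_def)
  next
    assume "gcol k i \<in> {{a,b} | a b. a < b \<and> b < k}"
    then obtain a b where "a < b" "b < k" "gcol k i = {a,b}" by auto
    then show ?thesis by (intro exI[of _ a] exI[of _ b]) (auto simp: vc_def)
  qed
qed

lemma vc_col: "a \<noteq> b \<Longrightarrow> a \<le> k \<Longrightarrow> b \<le> k \<Longrightarrow> \<exists>i<ncols k. gcol k i = vc k a b"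
proof -
  assume h: "a \<noteq> b" "a \<le> k" "b \<le> k"
  have "vc k a b \<in> set (cols k)" unfolding set_cols
  proof (cases "a = k \<or> b = k")
    case True
    then show "vc k a b \<in> (\<lambda>i. {i}) ` {0..<k} \<union> {{a,b} | a b. a < b \<and> b < k}"
      using h by (auto simp: vc_def)
  next
    case False
    then have "a < k" "b < k" using h by auto
    show "vc k a b \<in> (\<lambda>i. {i}) ` {0..<k} \<union> {{a,b} | a b. a < b \<and> b < k}"
    proof (cases "a < b")
      case True
      then show ?thesis using \<open>a < k\<close> \<open>b < k\<close> by (auto simp: vc_def)
    next
      case False
      then have "b < a" using h by auto
      then have "vc k a b = {b, a}" using \<open>a < k\<close> \<open>b < k\<close> by (auto simp: vc_def)
      then show ?thesis using \<open>b < a\<close> \<open>a < k\<close> by blast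
    qed
  qed
  then show ?thesis unfolding gcol_def ncols_def by (auto simp: in_set_conv_nth)
qed

lemma gcol_inj: "i < ncols k \<Longrightarrow> j < ncols k \<Longrightarrow> gcol k i = gcol k j \<Longrightarrow> i = j"
  using distinct_cols[of k] unfolding gcol_def ncols_def
  by (simp add: nth_eq_iff_index_eq)

lemma vc_sym: "vc k a b = vc k b a"
  unfolding vc_def by auto

lemma vc_delta: "a \<noteq> b \<Longrightarrow> b \<noteq> c \<Longrightarrow> a \<noteq> c \<Longrightarrow>
   vc k a c = (vc k a b - vc k b c) \<union> (vc k b c - vc k a b)"
  unfolding vc_def by auto

lemma vc_neq: "a \<noteq> b \<Longrightarrow> b \<noteq> c \<Longrightarrow> a \<noteq> c \<Longrightarrow> vc k a b \<noteq> vc k b c"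
  unfolding vc_def by auto

lemma gsum2: "j1 \<noteq> j2 \<Longrightarrow>
   gsum k {j1, j2} = (gcol k j1 - gcol k j2) \<union> (gcol k j2 - gcol k j1)"
proof -
  assume ne: "j1 \<noteq> j2"
  have c: "{j \<in> {j1, j2}. x \<in> gcol k j} =
      (if x \<in> gcol k j1 then {j1} else {}) \<union> (if x \<in> gcol k j2 then {j2} else {})" for x
    by auto
  show ?thesis unfolding gsum_def c using ne by auto
qed

lemma key:
  assumes corr: "correctable k E" and ne: "E \<noteq> {}" and sub: "E \<subseteq> {0..<ncols k}"
  shows "\<exists>i\<in>E. \<exists>j1 j2. j1 < ncols k \<and> j2 < ncols k \<and> j1 \<notin> E \<and> j2 \<notin> E \<and> j1 \<noteq> j2 \<and>
           gcol k i = (gcol k j1 - gcol k j2) \<union> (gcol k j2 - gcol k j1)"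
proof (rule ccontr)
  assume H: "\<not> ?thesis"
  define LC where "LC = gcol k ` ({0..<ncols k} - E)"
  define R where "R a b \<longleftrightarrow> a = b \<or> vc k a b \<in> LC" for a b
  have Rrefl: "R a a" for a unfolding R_def by simp
  have Rsym: "R a b \<Longrightarrow> R b a" for a b unfolding R_def using vc_sym by metis
  have Rtrans: "R a c" if h: "a \<le> k" "b \<le> k" "c \<le> k" "R a b" "R b c" for a b c
  proof (cases "a = b \<or> b = c \<or> a = c")
    case True then show ?thesis using h unfolding R_def by auto
  next
    case False
    then have d: "a \<noteq> b" "b \<noteq> c" "a \<noteq> c" by auto
    show ?thesis
    proof (rule ccontr)
      assume nac: "\<not> R a c"
      obtain i where i: "i < ncols k" "gcol k i = vc k a c" using vc_col[OF d(3) h(1,3)] by auto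
      have iE: "i \<in> E" using nac i unfolding R_def LC_def by auto
      obtain j1 where j1: "j1 < ncols k" "j1 \<notin> E" "gcol k j1 = vc k a b"
        using h(4) d unfolding R_def LC_def by auto
      obtain j2 where j2: "j2 < ncols k" "j2 \<notin> E" "gcol k j2 = vc k b c"
        using h(5) d unfolding R_def LC_def by auto
      have "j1 \<noteq> j2" using j1 j2 vc_neq[OF d, of k] by metis
      then show False using H iE j1 j2 i vc_delta[OF d] by blast
    qed
  qed
  obtain i where iE: "i \<in> E" using ne by auto
  then have il: "i < ncols k" using sub by auto
  obtain x y where xy: "x \<noteq> y" "x \<le> k" "y \<le> k" "gcol k i = vc k x y"
    using col_vc[OF il] by auto
  have nRxy: "\<not> R x y"
  proof
    assume "R x y"
    then obtain j where "j < ncols k" "j \<notin> E" "gcol k j = gcol k i"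
      using xy unfolding R_def LC_def by auto
    then show False using gcol_inj[OF _ il] iE by metis
  qed
  obtain w z where wz: "w \<noteq> z" "w \<le> k" "z \<le> k" "\<not> R w k" "\<not> R w z" "gcol k i = vc k w z"
  proof (cases "R x k")
    case True
    then have "\<not> R y k" using nRxy Rtrans[of x k y] Rsym xy by blast
    then show ?thesis using that[of y x] xy nRxy Rsym vc_sym by metis
  next
    case False
    then show ?thesis using that[of x y] xy nRxy by metis
  qed
  have wk: "w < k" using wz(2,4) unfolding R_def by fastforce
  define u where "u = {v. v < k \<and> R v w}"
  have live: "\<not> codeword k u j" if j: "j < ncols k" "j \<notin> E" for j
  proof -
    obtain a b where ab: "a \<noteq> b" "a \<le> k" "b \<le> k" "gcol k j = vc k a b"
      using col_vc[OF j(1)] by auto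
    have Rab: "R a b" using ab j unfolding R_def LC_def by auto
    have "u \<inter> gcol k j = {} \<or> u \<inter> gcol k j = {a, b}"
    proof (cases "a = k \<or> b = k")
      case True
      then have "R k a \<and> R k b" using Rab Rsym Rrefl by auto
      then have "\<not> R a w \<and> \<not> R b w" using Rtrans[of k _ w] Rsym wz(2,4) ab(2,3) by blast
      then show ?thesis unfolding u_def using ab(4) by (auto simp: vc_def)
    next
      case False
      then have "gcol k j = {a, b}" "a < k" "b < k" using ab by (auto simp: vc_def)
      moreover have "R a w \<longleftrightarrow> R b w" using Rtrans[of a b w] Rtrans[of b a w] Rab Rsym ab wz(2) by blast
      ultimately show ?thesis unfolding u_def by auto
    qed
    then show ?thesis unfolding codeword_def using ab(1) by auto
  qed
  have er: "codeword k u i"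
  proof -
    have "u \<inter> gcol k i = {w}"
    proof -
      have "R w w" by (rule Rrefl)
      moreover have "\<not> R z w" using wz(5) Rsym by blast
      ultimately show ?thesis using wz(1,6) wk unfolding u_def vc_def by auto
    qed
    then show ?thesis unfolding codeword_def by simp
  qed
  have "u \<subseteq> {0..<k}" unfolding u_def by auto
  moreover have "{} \<subseteq> {0..<k}" by simp
  moreover have "\<forall>j < ncols k. j \<notin> E \<longrightarrow> codeword k u j = codeword k {} j"
    using live unfolding codeword_def by auto
  ultimately have "\<forall>j < ncols k. codeword k u j = codeword k {} j"
    using corr unfolding correctable_def by blast
  then show False using er il unfolding codeword_def by auto
qed

lemma correctable_mono: "correctable k E \<Longrightarrow> E' \<subseteq> E \<Longrightarrow> correctable k E'"
  unfolding correctable_def by blast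

lemma repair: "finite E \<Longrightarrow> E \<subseteq> {0..<ncols k} \<Longrightarrow> correctable k E \<Longrightarrow> easy_repairable k E"
proof (induction "card E" arbitrary: E rule: less_induct)
  case less
  show ?case
  proof (cases "E = {}")
    case True then show ?thesis by (simp add: easy_repairable.empty)
  next
    case False
    then obtain i j1 j2 where i: "i \<in> E" and j: "j1 < ncols k" "j2 < ncols k" "j1 \<notin> E" "j2 \<notin> E" "j1 \<noteq> j2"
        "gcol k i = (gcol k j1 - gcol k j2) \<union> (gcol k j2 - gcol k j1)"
      using key[OF less.prems(3) _ less.prems(2)] by blast
    have "easy_repairable k (E - {i})"
    proof -
      have "card (E - {i}) < card E" using less.prems(1) i by (rule card_Diff1_less)
      moreover have "correctable k (E - {i})" using correctable_mono[OF less.prems(3)] by blast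
      ultimately show ?thesis using less.hyps[of "E - {i}"] less.prems(1,2) by blast
    qed
    moreover have "related k i {j1, j2}" unfolding related_def
      using j i less.prems(2) gsum2[OF j(5)] by auto
    moreover have "i < ncols k" using i less.prems(2) by auto
    moreover have "j1 \<noteq> i" "j2 \<noteq> i" using i j by auto
    ultimately have "easy_repairable k (insert i (E - {i}))"
      using easy_repairable.step[of k "E - {i}" i "{j1, j2}"] i j less.prems(2)
      by (auto simp: card_insert_if)
    then show ?thesis using i by (simp add: insert_absorb)
  qed
qed

theorem theorem4p3:
  fixes k :: nat
  assumes "k \<ge> 2"
  shows "easy_repair_property k"
  unfolding easy_repair_property_def
  using repair finite_subset by blast

end
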